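(* Let $x_1,\dots,x_n \in \mathbb{R}^d$, $w \in \mathbb{R}^d$ and $c \in \mathbb{R}$. If $F(w) \geq c$, then $G(w) \geq \frac{1 - \exp(-nc)}{n}$. If additionally $c \leq 1/n$, then $G(w) \geq c/2$.
   Context: $F(w) = \frac{1}{n}\sum_{i=1}^n \log(1+\exp(-\langle w, x_i\rangle))$ and $G(w) = \frac{1}{n}\sum_{i=1}^n \frac{1}{\exp(\langle w, x_i\rangle)+1}$. *)

theory Defs
  imports "HOL-Analysis.Analysis"
begin

definition F :: "nat \<Rightarrow> (nat \<Rightarrow> real ^ 'd) \<Rightarrow> real ^ 'd \<Rightarrow> real" where
  "F n x w = (1 / real n) * (\<Sum>i = 1..n. ln (1 + exp (- (w \<bullet> x i))))"

definition G :: "nat \<Rightarrow> (nat \<Rightarrow> real ^ 'd) \<Rightarrow> real ^ 'd \<Rightarrow> real" where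
  "G n x w = (1 / real n) * (\<Sum>i = 1..n. 1 / (exp (w \<bullet> x i) + 1))"

end

theory Submission
  imports Defs
begin

lemma union_bound_prod:
  fixes g :: "nat \<Rightarrow> real"
  assumes "finite A" and "\<And>i. i \<in> A \<Longrightarrow> 0 \<le> g i \<and> g i \<le> 1"
  shows "1 - (\<Prod>i\<in>A. 1 - g i) \<le> (\<Sum>i\<in>A. g i) \<and> 0 \<le> (\<Prod>i\<in>A. 1 - g i) \<and> (\<Prod>i\<in>A. 1 - g i) \<le> 1"
  using assms
proof (induction A rule: finite_induct)
  case empty
  then show ?case by simp
next
  case (insert a A)
  define P where "P = (\<Prod>i\<in>A. 1 - g i)"
  have IH: "1 - P \<le> (\<Sum>i\<in>A. g i)" "0 \<le> P" "P \<le> 1" using insert unfolding P_def by auto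
  have ga: "0 \<le> g a" "g a \<le> 1" using insert by auto
  have gP: "g a * P \<le> g a" using IH ga by (simp add: mult_left_le)
  have "1 - (1 - g a) * P \<le> g a + (\<Sum>i\<in>A. g i)"
    using IH gP by (simp add: algebra_simps)
  moreover have "0 \<le> (1 - g a) * P" using IH ga by simp
  moreover have "(1 - g a) * P \<le> 1" using IH ga by (simp add: mult_le_one)
  ultimately show ?case using insert unfolding P_def by simp
qed

lemma one_minus_exp_ge: "0 \<le> t \<Longrightarrow> t \<le> 1 \<Longrightarrow> t / 2 \<le> 1 - exp (- (t::real))"
proof -
  assume t: "0 \<le> t" "t \<le> 1"
  have "exp ((1 - t) *\<^sub>R 0 + t *\<^sub>R (-1)) \<le> (1 - t) * exp 0 + t * exp (-1::real)"
    using convex_onD[OF exp_convex, of t 0 "-1"] t by simp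
  then have c: "exp (- t) \<le> (1 - t) + t * exp (-1::real)" by simp
  have "2 \<le> exp (1::real)" using exp_ge_add_one_self[of 1] by simp
  then have "exp (-1::real) \<le> 1/2" by (simp add: exp_minus field_simps)
  then have "t * exp (-1::real) \<le> t / 2" using t mult_left_mono[of "exp (-1::real)" "1/2" t] by simp
  then show ?thesis using c by linarith
qed

theorem lemma15:
  fixes n :: nat and x :: "nat \<Rightarrow> real ^ 'd" and w :: "real ^ 'd" and c :: real
  assumes "n \<ge> 1" and "F n x w \<ge> c"
  shows "G n x w \<ge> (1 - exp (- (real n * c))) / real n \<and>
         (c \<le> 1 / real n \<longrightarrow> G n x w \<ge> c / 2)"
proof -
  define g where "g i = 1 / (exp (w \<bullet> x i) + 1)" for i
  define l where "l i = ln (1 + exp (- (w \<bullet> x i)))" for i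
  have np: "real n > 0" using assms(1) by simp
  have g01: "0 \<le> g i \<and> g i \<le> 1" for i
    unfolding g_def by (simp add: add_pos_pos)
  have gl: "1 - g i = exp (- l i)" for i
  proof -
    have "exp (- l i) = 1 / (1 + exp (- (w \<bullet> x i)))"
      unfolding l_def by (simp add: exp_minus add_pos_pos inverse_eq_divide)
    also have "\<dots> = exp (w \<bullet> x i) / (exp (w \<bullet> x i) + 1)"
      by (simp add: exp_minus field_simps add_pos_pos)
    also have "\<dots> = 1 - g i"
    proof -
      have ne: "exp (w \<bullet> x i) + 1 \<noteq> 0" by (smt (verit) exp_gt_zero)
      show ?thesis unfolding g_def using ne by (simp add: diff_divide_distrib[symmetric] divide_simps)
    qed
    finally show ?thesis by simp
  qed
  have Gs: "G n x w = (\<Sum>i=1..n. g i) / real n" unfolding G_def g_def by simp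
  have Fs: "F n x w = (\<Sum>i=1..n. l i) / real n" unfolding F_def l_def by simp
  have sl: "real n * c \<le> (\<Sum>i=1..n. l i)" using assms(2) Fs np by (simp add: field_simps)
  have ub: "1 - (\<Prod>i\<in>{1..n}. 1 - g i) \<le> (\<Sum>i=1..n. g i)"
    using union_bound_prod[of "{1..n}" g] g01 by auto
  have "(\<Prod>i\<in>{1..n}. 1 - g i) = exp (- (\<Sum>i=1..n. l i))"
    by (simp add: gl exp_sum[symmetric] sum_negf)
  also have "\<dots> \<le> exp (- (real n * c))" using sl by simp
  finally have main: "1 - exp (- (real n * c)) \<le> (\<Sum>i=1..n. g i)" using ub by linarith
  have part1: "G n x w \<ge> (1 - exp (- (real n * c))) / real n"
    unfolding Gs using main np by (simp add: divide_right_mono)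
  have part2: "G n x w \<ge> c / 2" if c1: "c \<le> 1 / real n"
  proof (cases "c \<ge> 0")
    case True
    have "real n * c \<le> 1" using c1 np by (simp add: field_simps)
    then have "real n * c / 2 \<le> 1 - exp (- (real n * c))"
      using one_minus_exp_ge[of "real n * c"] True np by simp
    then have "c / 2 \<le> (1 - exp (- (real n * c))) / real n" using np by (simp add: field_simps)
    then show ?thesis using part1 by linarith
  next
    case False
    have "0 \<le> G n x w" unfolding Gs using g01 np by (simp add: sum_nonneg)
    then show ?thesis using False by linarith
  qed
  show ?thesis using part1 part2 by blast
qed

end
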